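(* Let $k\ge1$, let $B\in\mathbb Z^{k\times k}$ with $\det B\ne0$, and let $\psi:B\mathbb Z^k\to\mathbb Z^k$, $z\mapsto Mz$, be a homomorphism given by a matrix $M\in\mathbb Q^{k\times k}$. Then \[R(\psi)=[\mathbb Z^k:B\mathbb Z^k]\cdot|\det(I_k-M)|_\infty .\]
   Context: $R(\psi)$ is the number of classes of the relation on $\mathbb Z^k$ given by $z_1\sim_\psi z_2\iff\exists z\in B\mathbb Z^k:\ z_1=z+z_2-\psi(z)$. $|a|_\infty=|a|$ if $a\neq0$ and $|0|_\infty=\infty$. *)

theory Defs
  imports "HOL-Analysis.Analysis"
begin

definition qvec :: "int ^ 'n \<Rightarrow> rat ^ 'n" where
  "qvec z = (\<chi> i. of_int (z $ i))"

definition num_classes :: "('a \<times> 'a) set \<Rightarrow> ereal" where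
  "num_classes r = (if finite (UNIV // r) then ereal (real (card (UNIV // r))) else \<infinity>)"

definition lattice_index :: "int ^ 'n ^ 'n \<Rightarrow> ereal" where
  "lattice_index B = num_classes {(z1, z2). z1 - z2 \<in> range (\<lambda>x. B *v x)}"

definition reidemeister_number :: "int ^ 'n ^ 'n \<Rightarrow> rat ^ 'n ^ 'n \<Rightarrow> ereal" where
  "reidemeister_number B M = num_classes
     {(z1, z2). \<exists>z \<in> range (\<lambda>x. B *v x). qvec z1 = qvec z + qvec z2 - M *v qvec z}"

definition abs_inf :: "rat \<Rightarrow> ereal" where
  "abs_inf a = (if a \<noteq> 0 then ereal (real_of_rat \<bar>a\<bar>) else \<infinity>)"

end

theory Submission
  imports Defs
begin

definition colop :: "int^'n^'n \<Rightarrow> 'n \<Rightarrow> 'n \<Rightarrow> int \<Rightarrow> int^'n^'n" where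
  "colop A a b c = (\<chi> i j. if j = b then A$i$b + c * A$i$a else A$i$j)"

definition addv :: "int^'n \<Rightarrow> 'n \<Rightarrow> int \<Rightarrow> int^'n" where
  "addv x a t = x + (\<chi> j. if j = a then t else 0)"

lemma mult_addv: "(A *v addv x a t) $ j = (A *v x) $ j + A$j$a * t"
proof -
  have "(A *v (\<chi> j. if j = a then t else 0)) $ j = A$j$a * t"
    by (simp add: matrix_vector_mult_def if_distrib sum.delta cong: if_cong)
  then show ?thesis by (simp add: addv_def matrix_vector_right_distrib)
qed

lemma colop_mult:
  assumes "a \<noteq> b"
  shows "colop A a b c *v x = A *v addv x a (c * x$b)"
proof -
  have "(colop A a b c *v x) $ i = (A *v addv x a (c * x$b)) $ i" for i
  proof -
    have "(colop A a b c *v x) $ i = (\<Sum>j\<in>UNIV. A$i$j * x$j + (if j = b then c * A$i$a * x$b else 0))"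
      unfolding matrix_vector_mult_def colop_def
      by (auto intro!: sum.cong simp: algebra_simps)
    also have "\<dots> = (A *v x)$i + c * A$i$a * x$b"
      by (simp add: sum.distrib matrix_vector_mult_def)
    finally show ?thesis by (simp add: mult_addv algebra_simps)
  qed
  then show ?thesis by (simp add: vec_eq_iff)
qed

lemma addv_addv: "addv (addv x a s) a t = addv x a (s + t)"
  by (simp add: addv_def vec_eq_iff)

lemma addv_nth: "addv x a t $ j = (if j = a then x$j + t else x$j)"
  by (simp add: addv_def)

lemma colop_range:
  assumes "a \<noteq> b"
  shows "range (\<lambda>x. colop A a b c *v x) = range (\<lambda>x. A *v x)"
proof
  show "range (\<lambda>x. colop A a b c *v x) \<subseteq> range (\<lambda>x. A *v x)"
    using colop_mult[OF assms] by auto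
  show "range (\<lambda>x. A *v x) \<subseteq> range (\<lambda>x. colop A a b c *v x)"
  proof
    fix y assume "y \<in> range (\<lambda>x. A *v x)"
    then obtain x where y: "y = A *v x" by auto
    let ?x = "addv x a (- c * x$b)"
    have "colop A a b c *v ?x = A *v addv ?x a (c * ?x$b)" by (rule colop_mult[OF assms])
    also have "addv ?x a (c * ?x$b) = x"
      using assms by (simp add: addv_nth vec_eq_iff)
    finally show "y \<in> range (\<lambda>x. colop A a b c *v x)" using y by (metis rangeI)
  qed
qed

lemma colop_det:
  assumes "a \<noteq> b"
  shows "det (colop A a b c) = det A"
proof -
  have "transpose (colop A a b c) = (\<chi> k. if k = b then row b (transpose A) + c *s row a (transpose A) else row k (transpose A))"
    by (simp add: vec_eq_iff colop_def transpose_def row_def)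
  then have "det (transpose (colop A a b c)) = det (transpose A)"
    using det_row_operation[of b a "transpose A" c] assms by simp
  then show ?thesis by simp
qed

lemma colop_nth: "colop A a b c $ i $ j = (if j = b then A$i$b + c * A$i$a else A$i$j)"
  by (simp add: colop_def)



definition good :: "'n set \<Rightarrow> int^'n^'n \<Rightarrow> int^'n^'n \<Rightarrow> bool" where
  "good S A A' \<longleftrightarrow> range (\<lambda>x. A' *v x) = range (\<lambda>x. A *v x) \<and> det A' = det A \<and>
     (\<forall>r j. j \<notin> S \<longrightarrow> A'$r$j = A$r$j) \<and> (\<forall>r. (\<forall>j\<in>S. A$r$j = 0) \<longrightarrow> (\<forall>j\<in>S. A'$r$j = 0))"

lemma good_refl: "good S A A" by (simp add: good_def)

lemma good_trans: "good S A B \<Longrightarrow> good S B C \<Longrightarrow> good S A C"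
  unfolding good_def by metis

lemma good_colop: "a \<in> S \<Longrightarrow> b \<in> S \<Longrightarrow> a \<noteq> b \<Longrightarrow> good S A (colop A a b c)"
  unfolding good_def using colop_range[of a b A c] colop_det[of a b A c]
  by (auto simp: colop_nth)

lemma euclid:
  fixes A :: "int^'n^'n"
  assumes "p \<in> S"
  shows "\<exists>A'. good S A A' \<and> (\<forall>j\<in>S. j \<noteq> p \<longrightarrow> A'$i$j = 0)"
proof -
  have "\<And>A :: int^'n^'n. (\<Sum>j\<in>S. nat \<bar>A$i$j\<bar>) = m \<Longrightarrow> \<exists>A'. good S A A' \<and> (\<forall>j\<in>S. j \<noteq> p \<longrightarrow> A'$i$j = 0)" for m
  proof (induction m rule: less_induct)
    case (less m A)
    show ?case
    proof (cases "\<exists>a\<in>S. \<exists>b\<in>S. a \<noteq> b \<and> A$i$a \<noteq> 0 \<and> A$i$b \<noteq> 0 \<and> \<bar>A$i$a\<bar> \<le> \<bar>A$i$b\<bar>")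
      case True
      then obtain a b where ab: "a \<in> S" "b \<in> S" "a \<noteq> b" "A$i$a \<noteq> 0" "A$i$b \<noteq> 0" "\<bar>A$i$a\<bar> \<le> \<bar>A$i$b\<bar>"
        by blast
      define c where "c = - (sgn (A$i$a) * sgn (A$i$b))"
      define A1 where "A1 = colop A a b c"
      have g1: "good S A A1" unfolding A1_def using ab by (intro good_colop)
      have e_b: "\<bar>A1$i$b\<bar> = \<bar>A$i$b\<bar> - \<bar>A$i$a\<bar>"
      proof -
        have "A1$i$b = A$i$b - sgn (A$i$b) * \<bar>A$i$a\<bar>"
          unfolding A1_def colop_nth c_def by (simp add: abs_mult_sgn algebra_simps abs_sgn mult.commute)
        then show ?thesis using ab(5,6)
          by (cases "A$i$b > 0") (auto simp: abs_if sgn_if)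
      qed
      have e_o: "A1$i$j = A$i$j" if "j \<noteq> b" for j
        using that unfolding A1_def colop_nth by simp
      have "(\<Sum>j\<in>S. nat \<bar>A1$i$j\<bar>) < (\<Sum>j\<in>S. nat \<bar>A$i$j\<bar>)"
      proof -
        have "(\<Sum>j\<in>S. nat \<bar>A1$i$j\<bar>) = nat \<bar>A1$i$b\<bar> + (\<Sum>j\<in>S-{b}. nat \<bar>A1$i$j\<bar>)"
          using ab(2) by (simp add: sum.remove)
        also have "(\<Sum>j\<in>S-{b}. nat \<bar>A1$i$j\<bar>) = (\<Sum>j\<in>S-{b}. nat \<bar>A$i$j\<bar>)"
          using e_o by (intro sum.cong) auto
        also have "(\<Sum>j\<in>S. nat \<bar>A$i$j\<bar>) = nat \<bar>A$i$b\<bar> + (\<Sum>j\<in>S-{b}. nat \<bar>A$i$j\<bar>)"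
          using ab(2) by (simp add: sum.remove)
        moreover have "nat \<bar>A1$i$b\<bar> < nat \<bar>A$i$b\<bar>" using e_b ab by simp
        ultimately show ?thesis by simp
      qed
      with less.prems obtain A' where "good S A1 A'" "\<forall>j\<in>S. j \<noteq> p \<longrightarrow> A'$i$j = 0"
        using less.IH by blast
      then show ?thesis using g1 good_trans by blast
    next
      case False
      then have F: "\<And>a b. a \<in> S \<Longrightarrow> b \<in> S \<Longrightarrow> a \<noteq> b \<Longrightarrow> A$i$a \<noteq> 0 \<Longrightarrow> A$i$b = 0"
        by (metis linorder_le_cases)
      show ?thesis
      proof (cases "\<exists>a\<in>S. a \<noteq> p \<and> A$i$a \<noteq> 0")
        case False
        then show ?thesis using good_refl by blast
      next
        case True
        then obtain a where a: "a \<in> S" "a \<noteq> p" "A$i$a \<noteq> 0" by blast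
        have z: "\<forall>j\<in>S. j \<noteq> a \<longrightarrow> A$i$j = 0" using F a by metis
        define A1 where "A1 = colop A a p 1"
        define A2 where "A2 = colop A1 p a (-1)"
        have "good S A A2" unfolding A2_def A1_def
          using a assms by (metis good_colop good_trans)
        moreover have "\<forall>j\<in>S. j \<noteq> p \<longrightarrow> A2$i$j = 0"
          using z a assms unfolding A2_def A1_def colop_nth by auto
        ultimately show ?thesis by blast
      qed
    qed
  qed
  then show ?thesis by blast
qed



lemma triangularize:
  fixes A :: "int^'n^'n" and ord :: "'n \<Rightarrow> nat"
  assumes "inj ord"
  shows "\<exists>A'. range (\<lambda>x. A' *v x) = range (\<lambda>x. A *v x) \<and> det A' = det A \<and> (\<forall>i j. ord i < ord j \<longrightarrow> A'$i$j = 0)"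
proof -
  have "\<exists>A'. range (\<lambda>x. A' *v x) = range (\<lambda>x. A *v x) \<and> det A' = det A \<and> (\<forall>i j. ord i < k \<and> ord i < ord j \<longrightarrow> A'$i$j = 0)" for k
  proof (induction k)
    case 0
    then show ?case by auto
  next
    case (Suc k)
    then obtain A' where A': "range (\<lambda>x. A' *v x) = range (\<lambda>x. A *v x)" "det A' = det A"
       "\<forall>i j. ord i < k \<and> ord i < ord j \<longrightarrow> A'$i$j = 0" by blast
    show ?case
    proof (cases "\<exists>i. ord i = k")
      case False
      then have "ord i < Suc k \<longleftrightarrow> ord i < k" for i by (metis less_Suc_eq)
      then show ?thesis using A' by metis
    next
      case True
      then obtain i where i: "ord i = k" by blast
      obtain A'' where A'': "good {j. k \<le> ord j} A' A''" "\<forall>j\<in>{j. k \<le> ord j}. j \<noteq> i \<longrightarrow> A''$i$j = 0"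
        using euclid[of i "{j. k \<le> ord j}" A' i] i by auto
      have "\<forall>i j. ord i < Suc k \<and> ord i < ord j \<longrightarrow> A''$i$j = 0"
      proof (intro allI impI)
        fix r j assume rj: "ord r < Suc k \<and> ord r < ord j"
        show "A''$r$j = 0"
        proof (cases "ord r < k")
          case True
          show ?thesis
          proof (cases "k \<le> ord j")
            case True
            have "\<forall>j\<in>{j. k \<le> ord j}. A'$r$j = 0" using A'(3) \<open>ord r < k\<close> by auto
            then show ?thesis using A''(1) True unfolding good_def by auto
          next
            case False
            then show ?thesis using A''(1) A'(3) rj unfolding good_def by auto
          qed
        next
          case False
          then have "r = i" using rj i assms by (metis inj_eq less_Suc_eq)
          then show ?thesis using A''(2) rj i by (metis less_imp_le less_not_refl mem_Collect_eq)
        qed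
      qed
      then show ?thesis using A' A''(1) unfolding good_def by metis
    qed
  qed
  moreover have "ord i < Suc (Max (range ord))" for i
    by (simp add: le_imp_less_Suc)
  ultimately show ?thesis by meson
qed

lemma perm_ord_id:
  fixes ord :: "'n \<Rightarrow> nat"
  assumes "inj ord" "p permutes (UNIV::'n set)" "\<forall>i. ord (p i) \<le> ord i"
  shows "p = id"
proof -
  have "\<forall>i. ord i = m \<longrightarrow> p i = i" for m
  proof (induction m rule: less_induct)
    case (less m)
    show ?case
    proof (intro allI impI)
      fix i assume im: "ord i = m"
      show "p i = i"
      proof (cases "ord (p i) < ord i")
        case True
        then have "p (p i) = p i" using less im by blast
        then have "p i = i" using permutes_inj[OF assms(2)] by (metis injD)
        then show ?thesis .
      next
        case False
        then have "ord (p i) = ord i" using assms(3) by (metis le_antisym not_less)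
        then show ?thesis using assms(1) by (metis injD)
      qed
    qed
  qed
  then show ?thesis by auto
qed

lemma det_lower_ord:
  fixes A :: "'a::comm_ring_1^'n^'n" and ord :: "'n \<Rightarrow> nat"
  assumes "inj ord" "\<forall>i j. ord i < ord j \<longrightarrow> A$i$j = 0"
  shows "det A = (\<Prod>i\<in>UNIV. A$i$i)"
proof -
  let ?PU = "{p. p permutes (UNIV::'n set)}"
  have "det A = (\<Sum>p\<in>?PU. if p = id then of_int (sign p) * (\<Prod>i\<in>UNIV. A$i$p i) else 0)"
    unfolding det_def
  proof (intro sum.cong refl)
    fix p assume p: "p \<in> ?PU"
    show "of_int (sign p) * (\<Prod>i\<in>UNIV. A$i$p i) = (if p = id then of_int (sign p) * (\<Prod>i\<in>UNIV. A$i$p i) else 0)"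
    proof (cases "p = id")
      case False
      then obtain i where "ord i < ord (p i)" using perm_ord_id[OF assms(1)] p
        by (metis mem_Collect_eq not_le)
      then have "A$i$p i = 0" using assms(2) by blast
      then have "(\<Prod>i\<in>UNIV. A$i$p i) = 0" by (intro prod_zero) auto
      then show ?thesis using False by simp
    qed simp
  qed
  also have "\<dots> = (\<Prod>i\<in>UNIV. A$i$i)"
    by (simp add: sum.delta' permutes_id sign_id)
  finally show ?thesis .
qed



definition latrel :: "int^'n^'n \<Rightarrow> ((int^'n) \<times> (int^'n)) set" where
  "latrel A = {(z1, z2). z1 - z2 \<in> range (\<lambda>x. A *v x)}"

lemma equiv_latrel: "equiv UNIV (latrel A)"
proof (rule equivI)
  show "refl (latrel A)" unfolding refl_on_def latrel_def
    by (auto intro!: image_eqI[where x=0])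
  show "sym (latrel A)" unfolding sym_def latrel_def
  proof (clarsimp)
    fix x y z assume "x - y = A *v z"
    then have "y - x = A *v (- z)" by (metis matrix_vector_mult_diff_distrib matrix_vector_mult_0_right minus_diff_eq diff_0)
    then show "y - x \<in> range ((*v) A)" by auto
  qed
  show "trans (latrel A)" unfolding trans_def latrel_def
  proof (clarsimp)
    fix x y z u v assume "x - y = A *v u" "y - z = A *v v"
    then have "x - z = A *v (u + v)" by (simp add: matrix_vector_right_distrib algebra_simps)
    then show "x - z \<in> range ((*v) A)" by auto
  qed
qed auto

lemma tri_exists_rep:
  fixes A :: "int^'n^'n" and ord :: "'n \<Rightarrow> nat"
  assumes "inj ord" "\<forall>i j. ord i < ord j \<longrightarrow> A$i$j = 0" "\<forall>i. A$i$i \<noteq> 0"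
  shows "\<exists>x. \<forall>i. 0 \<le> (z - A *v x)$i \<and> (z - A *v x)$i < \<bar>A$i$i\<bar>"
proof -
  have "\<exists>x. \<forall>i. ord i < k \<longrightarrow> 0 \<le> (z - A *v x)$i \<and> (z - A *v x)$i < \<bar>A$i$i\<bar>" for k
  proof (induction k)
    case 0 then show ?case by simp
  next
    case (Suc k)
    then obtain x where x: "\<forall>i. ord i < k \<longrightarrow> 0 \<le> (z - A *v x)$i \<and> (z - A *v x)$i < \<bar>A$i$i\<bar>" by blast
    show ?case
    proof (cases "\<exists>i. ord i = k")
      case False
      then show ?thesis using x by (metis less_Suc_eq)
    next
      case True
      then obtain i where i: "ord i = k" by blast
      define w where "w = (z - A *v x)$i"
      define t where "t = sgn (A$i$i) * (w div \<bar>A$i$i\<bar>)"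
      have key: "(z - A *v addv x i t)$j = (z - A *v x)$j - A$j$i * t" for j
        by (simp add: mult_addv)
      have "A$i$i * t = \<bar>A$i$i\<bar> * (w div \<bar>A$i$i\<bar>)"
        unfolding t_def by (simp add: abs_sgn mult.assoc[symmetric] mult.commute)
      then have ii: "(z - A *v addv x i t)$i = w mod \<bar>A$i$i\<bar>"
        using key[of i] unfolding w_def by (simp add: minus_div_mult_eq_mod[symmetric] mult.commute)
      have "0 \<le> (z - A *v addv x i t)$j \<and> (z - A *v addv x i t)$j < \<bar>A$j$j\<bar>" if "ord j < Suc k" for j
      proof (cases "j = i")
        case True
        then show ?thesis using ii assms(3) by simp
      next
        case False
        then have "ord j < k" using that i assms(1) by (metis inj_eq less_Suc_eq)
        then have "A$j$i = 0" using assms(2) i by auto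
        then show ?thesis using key[of j] x \<open>ord j < k\<close> by simp
      qed
      then show ?thesis by blast
    qed
  qed
  moreover have "ord i < Suc (Max (range ord))" for i
    by (simp add: le_imp_less_Suc)
  ultimately show ?thesis by meson
qed

lemma tri_unique:
  fixes A :: "int^'n^'n" and ord :: "'n \<Rightarrow> nat"
  assumes "inj ord" "\<forall>i j. ord i < ord j \<longrightarrow> A$i$j = 0"
    and "\<forall>i. 0 \<le> r$i \<and> r$i < \<bar>A$i$i\<bar>" "\<forall>i. 0 \<le> r'$i \<and> r'$i < \<bar>A$i$i\<bar>"
    and "r - r' = A *v x"
  shows "r = r'"
proof -
  have "\<forall>i. ord i = m \<longrightarrow> x$i = 0" for m
  proof (induction m rule: less_induct)
    case (less m)
    show ?case
    proof (intro allI impI)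
      fix i assume im: "ord i = m"
      have "(A *v x)$i = (\<Sum>j\<in>UNIV. if j = i then A$i$i * x$i else 0)"
        unfolding matrix_vector_mult_def
      proof (subst vec_lambda_beta, intro sum.cong refl)
        fix j
        show "A$i$j * x$j = (if j = i then A$i$i * x$i else 0)"
        proof (cases "ord j < ord i")
          case True then show ?thesis using less im by auto
        next
          case False
          then have "j = i \<or> ord i < ord j" using assms(1) by (metis inj_eq linorder_neqE_nat)
          then show ?thesis using assms(2) by auto
        qed
      qed
      also have "\<dots> = A$i$i * x$i" by simp
      finally have "r$i - r'$i = A$i$i * x$i" using assms(5) by (metis vector_minus_component)
      moreover have "\<bar>r$i - r'$i\<bar> < \<bar>A$i$i\<bar>"
        using assms(3)[rule_format, of i] assms(4)[rule_format, of i] unfolding abs_less_iff by linarith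
      ultimately have lt: "\<bar>A$i$i\<bar> * \<bar>x$i\<bar> < \<bar>A$i$i\<bar>" by (simp add: abs_mult)
      show "x$i = 0"
      proof (rule ccontr)
        assume "x$i \<noteq> 0"
        then have "1 \<le> \<bar>x$i\<bar>" by linarith
        then have "\<bar>A$i$i\<bar> * 1 \<le> \<bar>A$i$i\<bar> * \<bar>x$i\<bar>" by (intro mult_left_mono) auto
        then show False using lt by simp
      qed
    qed
  qed
  then have "x = 0" by (simp add: vec_eq_iff)
  then show ?thesis using assms(5) by simp
qed



lemma tri_card:
  fixes A :: "int^'n^'n" and ord :: "'n \<Rightarrow> nat"
  assumes "inj ord" "\<forall>i j. ord i < ord j \<longrightarrow> A$i$j = 0" "\<forall>i. A$i$i \<noteq> 0"
  shows "finite (UNIV // latrel A) \<and> card (UNIV // latrel A) = (\<Prod>i\<in>UNIV. nat \<bar>A$i$i\<bar>)"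
proof -
  define R where "R = {z :: int^'n. \<forall>i. 0 \<le> z$i \<and> z$i < \<bar>A$i$i\<bar>}"
  have R_eq: "R = vec_lambda ` (PiE UNIV (\<lambda>i. {0..<\<bar>A$i$i\<bar>}))"
  proof
    show "R \<subseteq> vec_lambda ` (PiE UNIV (\<lambda>i. {0..<\<bar>A$i$i\<bar>}))"
    proof
      fix z assume "z \<in> R"
      then have "vec_nth z \<in> PiE UNIV (\<lambda>i. {0..<\<bar>A$i$i\<bar>})" unfolding R_def by auto
      then show "z \<in> vec_lambda ` (PiE UNIV (\<lambda>i. {0..<\<bar>A$i$i\<bar>}))"
        by (metis image_eqI vec_nth_inverse)
    qed
    show "vec_lambda ` (PiE UNIV (\<lambda>i. {0..<\<bar>A$i$i\<bar>})) \<subseteq> R"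
      unfolding R_def by (auto simp: PiE_iff)
  qed
  have inj: "inj_on vec_lambda X" for X :: "('n \<Rightarrow> int) set"
    by (simp add: inj_on_def)
  have cardR: "card R = (\<Prod>i\<in>UNIV. nat \<bar>A$i$i\<bar>)"
    unfolding R_eq by (simp add: card_image[OF inj] card_PiE)
  have finR: "finite R" unfolding R_eq by (intro finite_imageI finite_PiE) auto
  have E: "equiv UNIV (latrel A)" by (rule equiv_latrel)
  have bij: "bij_betw (\<lambda>r. latrel A `` {r}) R (UNIV // latrel A)"
  proof (rule bij_betw_imageI)
    show "inj_on (\<lambda>r. latrel A `` {r}) R"
    proof (rule inj_onI)
      fix r r' assume rr: "r \<in> R" "r' \<in> R" "latrel A `` {r} = latrel A `` {r'}"
      then have "(r, r') \<in> latrel A" using equiv_class_eq_iff[OF E] by blast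
      then obtain x where "r - r' = A *v x" unfolding latrel_def by auto
      then show "r = r'" using tri_unique[OF assms(1,2)] rr(1,2) unfolding R_def by blast
    qed
    show "(\<lambda>r. latrel A `` {r}) ` R = UNIV // latrel A"
    proof
      show "(\<lambda>r. latrel A `` {r}) ` R \<subseteq> UNIV // latrel A" by (auto intro: quotientI)
      show "UNIV // latrel A \<subseteq> (\<lambda>r. latrel A `` {r}) ` R"
      proof
        fix X assume "X \<in> UNIV // latrel A"
        then obtain z where X: "X = latrel A `` {z}" by (auto elim: quotientE)
        obtain x where x: "\<forall>i. 0 \<le> (z - A *v x)$i \<and> (z - A *v x)$i < \<bar>A$i$i\<bar>"
          using tri_exists_rep[OF assms] by blast
        have "z - A *v x \<in> R" using x unfolding R_def by blast
        moreover have "(z, z - A *v x) \<in> latrel A" unfolding latrel_def by auto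
        then have "X = latrel A `` {z - A *v x}" using X equiv_class_eq_iff[OF E] by blast
        ultimately show "X \<in> (\<lambda>r. latrel A `` {r}) ` R" by blast
      qed
    qed
  qed
  show ?thesis using bij finR cardR bij_betw_finite bij_betw_same_card by metis
qed

lemma index_nonsing:
  fixes A :: "int^'n^'n"
  assumes "det A \<noteq> 0"
  shows "finite (UNIV // latrel A) \<and> int (card (UNIV // latrel A)) = \<bar>det A\<bar>"
proof -
  obtain ord :: "'n \<Rightarrow> nat" where "bij_betw ord UNIV {0..<card (UNIV::'n set)}"
    using ex_bij_betw_finite_nat[of "UNIV::'n set"] by auto
  then have io: "inj ord" by (simp add: bij_betw_def)
  obtain A' where A': "range (\<lambda>x. A' *v x) = range (\<lambda>x. A *v x)" "det A' = det A"
    "\<forall>i j. ord i < ord j \<longrightarrow> A'$i$j = 0"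
    using triangularize[OF io] by blast
  have rel: "latrel A' = latrel A" unfolding latrel_def using A'(1) by simp
  have dp: "det A' = (\<Prod>i\<in>UNIV. A'$i$i)" using det_lower_ord[OF io A'(3)] .
  have nz: "\<forall>i. A'$i$i \<noteq> 0" using dp A'(2) assms by auto
  have "finite (UNIV // latrel A') \<and> card (UNIV // latrel A') = (\<Prod>i\<in>UNIV. nat \<bar>A'$i$i\<bar>)"
    by (rule tri_card[OF io A'(3) nz])
  moreover have "int (\<Prod>i\<in>UNIV. nat \<bar>A'$i$i\<bar>) = \<bar>det A\<bar>"
    using dp A'(2) by (simp add: abs_prod)
  ultimately show ?thesis using rel by metis
qed

lemma det_of_int_mat:
  fixes A :: "int^'n^'n"
  shows "det ((\<chi> i j. of_int (A$i$j)) :: 'a::comm_ring_1^'n^'n) = of_int (det A)"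
  unfolding det_def by (simp add: of_int_sum of_int_mult of_int_prod)

lemma index_sing:
  fixes A :: "int^'n^'n"
  assumes "det A = 0"
  shows "infinite (UNIV // latrel A)"
proof -
  define qA :: "rat^'n^'n" where "qA = (\<chi> i j. of_int (A$i$j))"
  have "det qA = 0" unfolding qA_def det_of_int_mat using assms by simp
  then have "det (matrix (\<lambda>w. transpose qA *v w)) = 0" by (simp only: matrix_of_matrix_vector_mul det_transpose)
  then have "\<not> inj (\<lambda>w. transpose qA *v w)"
    using det_nz_iff_inj_gen[OF matrix_vector_mul_linear_gen] by blast
  then obtain u v where uv: "u \<noteq> v" "transpose qA *v u = transpose qA *v v"
    unfolding inj_def by blast
  define w where "w = u - v"
  have w0: "w \<noteq> 0" using uv(1) unfolding w_def by simp
  have tw: "transpose qA *v w = 0" using uv(2) unfolding w_def by (simp add: matrix_vector_mult_diff_distrib)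
  obtain i0 where i0: "w$i0 \<noteq> 0" using w0 by (metis vec_eq_iff zero_index)
  define phi where "phi z = (\<Sum>i\<in>UNIV. w$i * of_int (z$i))" for z :: "int^'n"
  have phi_rel: "phi z1 = phi z2" if zz: "(z1, z2) \<in> latrel A" for z1 z2
  proof -
    obtain x where x: "z1 - z2 = A *v x" using zz unfolding latrel_def by auto
    have "phi z1 - phi z2 = (\<Sum>i\<in>UNIV. w$i * of_int ((z1 - z2)$i))"
      unfolding phi_def by (simp add: sum_subtractf[symmetric] algebra_simps)
    also have "\<dots> = (\<Sum>i\<in>UNIV. \<Sum>j\<in>UNIV. w$i * (of_int (A$i$j) * of_int (x$j)))"
      unfolding x by (simp add: matrix_vector_mult_def of_int_sum sum_distrib_left)
    also have "\<dots> = (\<Sum>j\<in>UNIV. (\<Sum>i\<in>UNIV. qA$i$j * w$i) * of_int (x$j))"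
      by (subst sum.swap) (simp add: qA_def sum_distrib_left sum_distrib_right algebra_simps)
    also have "\<dots> = (\<Sum>j\<in>UNIV. (transpose qA *v w)$j * of_int (x$j))"
      by (simp add: matrix_vector_mult_def transpose_def)
    also have "\<dots> = 0" using tw by simp
    finally show ?thesis by simp
  qed
  define g where "g t = (\<chi> i. if i = i0 then int t else 0)" for t :: nat
  have phig: "phi (g t) = w$i0 * of_nat t" for t
    unfolding phi_def g_def by (simp add: if_distrib sum.delta cong: if_cong)
  have inj: "inj (\<lambda>t. latrel A `` {g t})"
  proof (rule injI)
    fix s t assume "latrel A `` {g s} = latrel A `` {g t}"
    then have "(g s, g t) \<in> latrel A" using equiv_class_eq_iff[OF equiv_latrel] by blast
    then have "w$i0 * of_nat s = w$i0 * of_nat t" using phi_rel phig by metis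
    then show "s = t" using i0 by simp
  qed
  have "range (\<lambda>t. latrel A `` {g t}) \<subseteq> UNIV // latrel A" by (auto intro: quotientI)
  moreover have "infinite (range (\<lambda>t. latrel A `` {g t}))"
    using inj by (simp add: finite_image_iff)
  ultimately show ?thesis using finite_subset by blast
qed



lemma num_classes_latrel:
  "num_classes (latrel A) = (if det A = 0 then \<infinity> else ereal (real_of_int \<bar>det A\<bar>))"
proof (cases "det A = 0")
  case True then show ?thesis using index_sing[OF True] by (simp add: num_classes_def)
next
  case False
  then have "finite (UNIV // latrel A)" "int (card (UNIV // latrel A)) = \<bar>det A\<bar>"
    using index_nonsing by blast+
  then show ?thesis using False unfolding num_classes_def
    by (metis of_int_of_nat_eq)
qed

definition qmat :: "int^'n^'n \<Rightarrow> rat^'n^'n" where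
  "qmat X = (\<chi> i j. of_int (X$i$j))"

lemma qvec_mult: "qvec (X *v x) = qmat X *v qvec x"
  by (simp add: vec_eq_iff qvec_def qmat_def matrix_vector_mult_def of_int_sum)

lemma qvec_inj: "qvec x = qvec y \<longleftrightarrow> x = y"
  by (simp add: qvec_def vec_eq_iff)

lemma qvec_add: "qvec (x + y) = qvec x + qvec y"
  by (simp add: qvec_def vec_eq_iff)

lemma of_rat_abs': "real_of_rat \<bar>q\<bar> = \<bar>real_of_rat q\<bar>"
proof (cases "q < 0")
  case True
  then have "real_of_rat q < 0" by (simp add: of_rat_less_0_iff)
  then show ?thesis using True by (simp add: of_rat_minus)
next
  case False
  then have "0 \<le> real_of_rat q" by (simp add: zero_le_of_rat_iff)
  then show ?thesis using False by simp
qed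

theorem mainTheorem6:
  fixes B :: "int ^ 'n ^ 'n" and M :: "rat ^ 'n ^ 'n"
  assumes "det B \<noteq> 0"
    and "\<forall>z \<in> range (\<lambda>x. B *v x). \<exists>y :: int ^ 'n. M *v qvec z = qvec y"
  shows "reidemeister_number B M = lattice_index B * abs_inf (det (mat 1 - M))"
proof -
  define e :: "'n \<Rightarrow> int^'n" where "e j = (\<chi> k. if k = j then 1 else 0)" for j
  have "\<forall>j. \<exists>y. M *v qvec (B *v e j) = qvec y" using assms(2) by blast
  then obtain Y where Y: "\<And>j. M *v qvec (B *v e j) = qvec (Y j)" by metis
  define C where "C = (\<chi> i j. (B *v e j)$i - Y j $ i)"
  have ev: "(X *v qvec (e j))$i = X$i$j" for X :: "rat^'n^'n" and i j
    by (simp add: e_def qvec_def matrix_vector_mult_def if_distrib sum.delta cong: if_cong)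
  have lidv: "(mat 1 - M) *v v = v - M *v v" for v
    by (simp add: matrix_vector_mult_diff_rdistrib)
  have QC: "qmat C = (mat 1 - M) ** qmat B"
  proof -
    have "qmat C $ i $ j = ((mat 1 - M) ** qmat B) $ i $ j" for i j
    proof -
      have "((mat 1 - M) ** qmat B) $ i $ j = (((mat 1 - M) ** qmat B) *v qvec (e j))$i" by (simp add: ev)
      also have "\<dots> = ((mat 1 - M) *v qvec (B *v e j))$i"
        by (simp add: qvec_mult matrix_vector_mul_assoc)
      also have "\<dots> = (qvec (B *v e j) - qvec (Y j))$i" by (simp add: lidv Y)
      also have "\<dots> = qmat C $ i $ j" by (simp add: qvec_def qmat_def C_def)
      finally show ?thesis by simp
    qed
    then show ?thesis by (simp add: vec_eq_iff)
  qed
  have rel: "{(z1, z2). \<exists>z \<in> range (\<lambda>x. B *v x). qvec z1 = qvec z + qvec z2 - M *v qvec z} = latrel C"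
  proof -
    have "qvec (B *v x) + qvec z2 - M *v qvec (B *v x) = qvec (z2 + C *v x)" for x z2
    proof -
      have "qvec (B *v x) + qvec z2 - M *v qvec (B *v x) = qvec z2 + (mat 1 - M) *v (qmat B *v qvec x)"
        by (simp add: lidv qvec_mult algebra_simps)
      also have "\<dots> = qvec z2 + qmat C *v qvec x" by (simp add: QC matrix_vector_mul_assoc)
      finally show ?thesis by (simp add: qvec_add qvec_mult)
    qed
    then show ?thesis unfolding latrel_def
      by (auto simp: qvec_inj algebra_simps)
  qed
  have RN: "reidemeister_number B M = num_classes (latrel C)"
    unfolding reidemeister_number_def rel ..
  have LI: "lattice_index B = num_classes (latrel B)"
    unfolding lattice_index_def latrel_def ..
  have dq: "det (qmat X) = of_int (det X)" for X :: "int^'n^'n"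
    unfolding qmat_def by (rule det_of_int_mat)
  have dC: "of_int (det C) = det (mat 1 - M) * of_int (det B)"
    using QC dq det_mul by metis
  show ?thesis
  proof (cases "det (mat 1 - M) = 0")
    case True
    then have "det C = 0" using dC by simp
    then show ?thesis using assms(1) True
      unfolding RN LI num_classes_latrel abs_inf_def by simp
  next
    case False
    then have "det C \<noteq> 0" using dC assms(1) by (metis mult_eq_0_iff of_int_eq_0_iff)
    moreover have "real_of_int \<bar>det C\<bar> = real_of_int \<bar>det B\<bar> * real_of_rat \<bar>det (mat 1 - M)\<bar>"
    proof -
      have "rat_of_int \<bar>det C\<bar> = rat_of_int \<bar>det B\<bar> * \<bar>det (mat 1 - M)\<bar>"
        using dC by (simp add: abs_mult)
      then have "real_of_rat (rat_of_int \<bar>det C\<bar>) = real_of_rat (rat_of_int \<bar>det B\<bar> * \<bar>det (mat 1 - M)\<bar>)"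
        by simp
      then show ?thesis by (simp only: of_rat_mult of_rat_of_int_eq)
    qed
    moreover have "num_classes (latrel C) = ereal (real_of_int \<bar>det C\<bar>)"
      using \<open>det C \<noteq> 0\<close> by (simp only: num_classes_latrel if_False)
    moreover have "num_classes (latrel B) = ereal (real_of_int \<bar>det B\<bar>)"
      using assms(1) by (simp only: num_classes_latrel if_False)
    moreover have "abs_inf (det (mat 1 - M)) = ereal (real_of_rat \<bar>det (mat 1 - M)\<bar>)"
      using False by (simp only: abs_inf_def not_False_eq_True if_True)
    ultimately show ?thesis unfolding RN LI by (simp only: times_ereal.simps(1))
  qed
qed


end
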